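(* Let $(G,M,I)$ be a finite formal context and, for each $k\ge0$, let $\mathcal F_k$ be the cosheaf on $D(G,M,I)$ with $\mathcal F_k(\sigma)=C_k(\Delta[\sigma'])$ and extension maps induced by the inclusions $\tau'\subseteq\sigma'$ for $\sigma\subseteq\tau$. The simplicial boundary maps $C_k(\Delta[\sigma'])\to C_{k-1}(\Delta[\sigma'])$ commute with the extension maps and hence induce maps $H_0(\mathcal F_k)\to H_0(\mathcal F_{k-1})$ on zeroth cellular cosheaf homology. The resulting chain complex $(H_0(\mathcal F_k))_{k\ge0}$ is isomorphic to the real simplicial chain complex $C^\Delta(D(M,G,I^T))$ of the dual Dowker complex.
   Context: A formal context is a triple $(G,M,I)$ with $I\subseteq G\times M$; for $A\subseteq G$, $A'=\{m: gIm\ \forall g\in A\}$, for $B\subseteq M$, $B'=\{g: gIm\ \forall m\in B\}$. The Dowker complex $D(G,M,I)$ is the abstract simplicial complex on $G$ whose simplices are the nonempty $\sigma\subseteq G$ with $\sigma'\ne\emptyset$; dually $D(M,G,I^T)$ is the abstract simplicial complex on $M$ whose simplices are the nonempty $S\subseteq M$ with $S'\neq\emptyset$. $C^\Delta$ and $C_k$ denote real (oriented) simplicial chains, with orientations from fixed linear orders on $G$ and $M$; $\Delta[S]$ is the full simplex on $S$. For a cosheaf $\mathcal F$ of real vector spaces on $D(G,M,I)$, cellular cosheaf homology is the homology of $C_j=\bigoplus_{\dim\tau=j}\mathcal F(\tau)$ with $\partial_j x=\sum_{i=0}^{j}(-1)^i\mathcal F(\tau_i\subseteq\tau)(x)$ for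 $x\in\mathcal F(\tau)$, $\tau=\{g_0<\dots<g_j\}$, $\tau_i=\tau\setminus\{g_i\}$; in particular $H_0(\mathcal F)=C_0/\partial_1(C_1)$. *)

theory Defs
  imports Complex_Main
begin

definition attrs :: "'m set \<Rightarrow> ('g \<times> 'm) set \<Rightarrow> 'g set \<Rightarrow> 'm set" where
  "attrs M I A = {m \<in> M. \<forall>g\<in>A. (g, m) \<in> I}"

definition objs :: "'g set \<Rightarrow> ('g \<times> 'm) set \<Rightarrow> 'm set \<Rightarrow> 'g set" where
  "objs G I B = {g \<in> G. \<forall>m\<in>B. (g, m) \<in> I}"

definition dowker_simplex :: "'g set \<Rightarrow> 'm set \<Rightarrow> ('g \<times> 'm) set \<Rightarrow> 'g set \<Rightarrow> bool" where
  "dowker_simplex G M I \<sigma> \<longleftrightarrow> \<sigma> \<noteq> {} \<and> \<sigma> \<subseteq> G \<and> attrs M I \<sigma> \<noteq> {}"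

definition dual_simplex :: "'g set \<Rightarrow> 'm set \<Rightarrow> ('g \<times> 'm) set \<Rightarrow> 'm set \<Rightarrow> bool" where
  "dual_simplex G M I S \<longleftrightarrow> S \<noteq> {} \<and> S \<subseteq> M \<and> objs G I S \<noteq> {}"

text \<open>Real oriented k-chains of the full simplex on S: a chain is a function on
(k+1)-element subsets T of S (the simplex with vertices of T in increasing order).\<close>
definition simp_chains :: "nat \<Rightarrow> 'm set \<Rightarrow> ('m set \<Rightarrow> real) set" where
  "simp_chains k S = {c. \<forall>T. c T \<noteq> 0 \<longrightarrow> T \<subseteq> S \<and> card T = Suc k}"

text \<open>Simplicial boundary: for T = tau minus {m}, where m is the i-th vertex (from 0)
of tau = insert m T, the sign is (-1)^i with i = number of elements of T below m.\<close>
definition bd_simp :: "'m::linorder set \<Rightarrow> ('m set \<Rightarrow> real) \<Rightarrow> ('m set \<Rightarrow> real)" where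
  "bd_simp M c = (\<lambda>T. \<Sum>m\<in>M - T. (-1) ^ card {y\<in>T. y < m} * c (insert m T))"

definition dual_chains :: "'g set \<Rightarrow> 'm set \<Rightarrow> ('g \<times> 'm) set \<Rightarrow> nat \<Rightarrow> ('m set \<Rightarrow> real) set" where
  "dual_chains G M I k = {c. \<forall>T. c T \<noteq> 0 \<longrightarrow> dual_simplex G M I T \<and> card T = Suc k}"

text \<open>Cellular chains C_j of the cosheaf F_k, F_k(sigma) = C_k(Delta[sigma']):
an element is a family x sigma, nonzero only on j-simplices sigma of D(G,M,I),
with x sigma in C_k(Delta[sigma']).\<close>
definition cosheaf_chains :: "'g set \<Rightarrow> 'm set \<Rightarrow> ('g \<times> 'm) set \<Rightarrow> nat \<Rightarrow> nat
    \<Rightarrow> ('g set \<Rightarrow> 'm set \<Rightarrow> real) set" where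
  "cosheaf_chains G M I k j = {x. \<forall>\<sigma>.
      (x \<sigma> \<noteq> (\<lambda>_. 0) \<longrightarrow> dowker_simplex G M I \<sigma> \<and> card \<sigma> = Suc j) \<and>
      x \<sigma> \<in> simp_chains k (attrs M I \<sigma>)}"

text \<open>Cellular cosheaf boundary. The extension maps F_k(sigma_i \<subseteq> tau) are the
inclusions C_k(Delta[tau']) \<subseteq> C_k(Delta[sigma_i']), i.e. the identity on chain functions.\<close>
definition cosheaf_bd :: "'g::linorder set \<Rightarrow> ('g set \<Rightarrow> 'm set \<Rightarrow> real) \<Rightarrow> ('g set \<Rightarrow> 'm set \<Rightarrow> real)" where
  "cosheaf_bd G x = (\<lambda>\<sigma> S. \<Sum>g\<in>G - \<sigma>. (-1) ^ card {y\<in>\<sigma>. y < g} * x (insert g \<sigma>) S)"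

definition cosheaf_B1 :: "'g::linorder set \<Rightarrow> 'm set \<Rightarrow> ('g \<times> 'm) set \<Rightarrow> nat
    \<Rightarrow> ('g set \<Rightarrow> 'm set \<Rightarrow> real) set" where
  "cosheaf_B1 G M I k = cosheaf_bd G ` cosheaf_chains G M I k 1"

definition H0_class :: "'g::linorder set \<Rightarrow> 'm set \<Rightarrow> ('g \<times> 'm) set \<Rightarrow> nat
    \<Rightarrow> ('g set \<Rightarrow> 'm set \<Rightarrow> real) \<Rightarrow> ('g set \<Rightarrow> 'm set \<Rightarrow> real) set" where
  "H0_class G M I k x = {y \<in> cosheaf_chains G M I k 0.
      (\<lambda>\<sigma> S. x \<sigma> S - y \<sigma> S) \<in> cosheaf_B1 G M I k}"

definition H0 :: "'g::linorder set \<Rightarrow> 'm set \<Rightarrow> ('g \<times> 'm) set \<Rightarrow> nat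
    \<Rightarrow> ('g set \<Rightarrow> 'm set \<Rightarrow> real) set set" where
  "H0 G M I k = H0_class G M I k ` cosheaf_chains G M I k 0"

definition sum_bd :: "'m::linorder set \<Rightarrow> ('g set \<Rightarrow> 'm set \<Rightarrow> real) \<Rightarrow> ('g set \<Rightarrow> 'm set \<Rightarrow> real)" where
  "sum_bd M x = (\<lambda>\<sigma>. bd_simp M (x \<sigma>))"

end

theory Submission
  imports Defs
begin

lemma chains_lin:
  assumes "x \<in> cosheaf_chains G M I k j" "y \<in> cosheaf_chains G M I k j"
  shows "(\<lambda>\<sigma> S. a * x \<sigma> S + b * y \<sigma> S) \<in> cosheaf_chains G M I k j"
proof -
  { fix \<sigma>
    have h1: "x \<sigma> \<noteq> (\<lambda>_. 0) \<longrightarrow> dowker_simplex G M I \<sigma> \<and> card \<sigma> = Suc j"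
      and h2: "x \<sigma> \<in> simp_chains k (attrs M I \<sigma>)"
      and h3: "y \<sigma> \<noteq> (\<lambda>_. 0) \<longrightarrow> dowker_simplex G M I \<sigma> \<and> card \<sigma> = Suc j"
      and h4: "y \<sigma> \<in> simp_chains k (attrs M I \<sigma>)"
      using assms unfolding cosheaf_chains_def by blast+
    have "(\<lambda>S. a * x \<sigma> S + b * y \<sigma> S) \<noteq> (\<lambda>_. 0) \<longrightarrow> dowker_simplex G M I \<sigma> \<and> card \<sigma> = Suc j"
    proof
      assume "(\<lambda>S. a * x \<sigma> S + b * y \<sigma> S) \<noteq> (\<lambda>_. 0)"
      hence "x \<sigma> \<noteq> (\<lambda>_. 0) \<or> y \<sigma> \<noteq> (\<lambda>_. 0)" by auto
      thus "dowker_simplex G M I \<sigma> \<and> card \<sigma> = Suc j" using h1 h3 by blast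
    qed
    moreover have "(\<lambda>S. a * x \<sigma> S + b * y \<sigma> S) \<in> simp_chains k (attrs M I \<sigma>)"
      unfolding simp_chains_def
    proof (intro CollectI allI impI)
      fix T assume "a * x \<sigma> T + b * y \<sigma> T \<noteq> 0"
      hence "x \<sigma> T \<noteq> 0 \<or> y \<sigma> T \<noteq> 0" by auto
      thus "T \<subseteq> attrs M I \<sigma> \<and> card T = Suc k" using h2 h4 unfolding simp_chains_def by blast
    qed
    ultimately have "((\<lambda>S. a * x \<sigma> S + b * y \<sigma> S) \<noteq> (\<lambda>_. 0) \<longrightarrow> dowker_simplex G M I \<sigma> \<and> card \<sigma> = Suc j)
       \<and> (\<lambda>S. a * x \<sigma> S + b * y \<sigma> S) \<in> simp_chains k (attrs M I \<sigma>)" by blast }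
  thus ?thesis unfolding cosheaf_chains_def by blast
qed

lemma sum_bd_chains:
  assumes "x \<in> cosheaf_chains G M I (Suc k) j"
  shows "sum_bd M x \<in> cosheaf_chains G M I k j"
proof -
  { fix \<sigma>
    have h1: "x \<sigma> \<noteq> (\<lambda>_. 0) \<longrightarrow> dowker_simplex G M I \<sigma> \<and> card \<sigma> = Suc j"
      and h2: "x \<sigma> \<in> simp_chains (Suc k) (attrs M I \<sigma>)"
      using assms unfolding cosheaf_chains_def by blast+
    have "sum_bd M x \<sigma> \<noteq> (\<lambda>_. 0) \<longrightarrow> dowker_simplex G M I \<sigma> \<and> card \<sigma> = Suc j"
    proof
      assume "sum_bd M x \<sigma> \<noteq> (\<lambda>_. 0)"
      hence "x \<sigma> \<noteq> (\<lambda>_. 0)" by (auto simp: sum_bd_def bd_simp_def)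
      thus "dowker_simplex G M I \<sigma> \<and> card \<sigma> = Suc j" using h1 by blast
    qed
    moreover have "sum_bd M x \<sigma> \<in> simp_chains k (attrs M I \<sigma>)"
      unfolding simp_chains_def
    proof (intro CollectI allI impI)
      fix T assume "sum_bd M x \<sigma> T \<noteq> 0"
      then obtain m where m: "m \<in> M - T" "x \<sigma> (insert m T) \<noteq> 0"
        unfolding sum_bd_def bd_simp_def by (metis (no_types, lifting) mult_zero_right sum.neutral)
      hence "insert m T \<subseteq> attrs M I \<sigma> \<and> card (insert m T) = Suc (Suc k)"
        using h2 unfolding simp_chains_def by blast
      moreover hence "finite (insert m T)" by (metis card.infinite nat.distinct(1))
      ultimately show "T \<subseteq> attrs M I \<sigma> \<and> card T = Suc k" using m by auto
    qed
    ultimately have "(sum_bd M x \<sigma> \<noteq> (\<lambda>_. 0) \<longrightarrow> dowker_simplex G M I \<sigma> \<and> card \<sigma> = Suc j)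
       \<and> sum_bd M x \<sigma> \<in> simp_chains k (attrs M I \<sigma>)" by blast }
  thus ?thesis unfolding cosheaf_chains_def by blast
qed

lemma bd_commute:
  assumes "finite G" "finite M"
  shows "sum_bd M (cosheaf_bd G x) = cosheaf_bd G (sum_bd M x)"
  unfolding sum_bd_def bd_simp_def cosheaf_bd_def
  apply (rule ext)+
  apply (simp add: sum_distrib_left mult.left_commute)
  apply (rule sum.swap)
  done

lemma kill:
  fixes G :: "'g::linorder set"
  assumes "finite G"
  shows "(\<Sum>g\<in>G. cosheaf_bd G y {g} T) = 0"
proof -
  define F where "F g g' = (if g = g' then 0 else (-1::real) ^ card {z\<in>{g}. z < g'} * y {g, g'} T)" for g g'
  have e1: "cosheaf_bd G y {g} T = (\<Sum>g'\<in>G. F g g')" for g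
  proof -
    have "(\<Sum>g'\<in>G. F g g') = (\<Sum>g'\<in>G - {g}. F g g')"
      by (rule sum.mono_neutral_right) (auto simp: assms F_def)
    also have "\<dots> = cosheaf_bd G y {g} T"
      unfolding cosheaf_bd_def F_def by (intro sum.cong) (auto simp: insert_commute)
    finally show ?thesis by simp
  qed
  have anti: "F g' g = - F g g'" for g g'
  proof (cases "g = g'")
    case False
    have c: "card {z\<in>{a}. z < b} = (if a < b then 1 else 0)" for a b :: 'g
    proof -
      have "{z\<in>{a}. z < b} = (if a < b then {a} else {})" by auto
      thus ?thesis by simp
    qed
    have w: "y {g', g} T = y {g, g'} T" by (simp add: insert_commute)
    show ?thesis
    proof (cases "g < g'")
      case True
      hence "\<not> g' < g" by simp
      thus ?thesis using True False unfolding F_def c w by simp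
    next
      case nlt: False
      hence "g' < g" using False by simp
      thus ?thesis using nlt False unfolding F_def c w by simp
    qed
  qed (simp add: F_def)
  have "(\<Sum>g\<in>G. \<Sum>g'\<in>G. F g g') = (\<Sum>g'\<in>G. \<Sum>g\<in>G. F g g')" by (rule sum.swap)
  also have "\<dots> = (\<Sum>g'\<in>G. \<Sum>g\<in>G. - F g' g)" by (intro sum.cong refl) (rule anti)
  also have "\<dots> = - (\<Sum>g\<in>G. \<Sum>g'\<in>G. F g g')" by (simp add: sum_negf)
  finally have "(\<Sum>g\<in>G. \<Sum>g'\<in>G. F g g') = 0" by simp
  thus ?thesis by (simp add: e1)
qed

lemma c0_elem:
  assumes "x \<in> cosheaf_chains G M I k 0" "x \<sigma> T \<noteq> 0"
  shows "\<exists>g. \<sigma> = {g} \<and> g \<in> objs G I T \<and> T \<subseteq> M \<and> card T = Suc k"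
proof -
  have "x \<sigma> \<noteq> (\<lambda>_. 0)" using assms(2) by auto
  hence d: "dowker_simplex G M I \<sigma> \<and> card \<sigma> = Suc 0" using assms(1) unfolding cosheaf_chains_def by blast
  then obtain g where g: "\<sigma> = {g}" by (metis card_1_singletonE One_nat_def)
  have "T \<subseteq> attrs M I \<sigma> \<and> card T = Suc k" using assms unfolding cosheaf_chains_def simp_chains_def by blast
  hence T: "T \<subseteq> {m \<in> M. \<forall>h\<in>{g}. (h, m) \<in> I}" "card T = Suc k" using g unfolding attrs_def by auto
  have "g \<in> G" using d g unfolding dowker_simplex_def by blast
  hence "g \<in> objs G I T" using T(1) unfolding objs_def by blast
  moreover have "T \<subseteq> M" using T(1) by blast
  ultimately show ?thesis using g T(2) by blast
qed

lemma exact: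
  fixes G :: "'g::linorder set"
  assumes fin: "finite G" and x: "x \<in> cosheaf_chains G M I k 0"
    and z: "\<And>T. (\<Sum>g\<in>G. x {g} T) = 0"
  shows "\<exists>y\<in>cosheaf_chains G M I k 1. cosheaf_bd G y = x"
proof -
  define Ob where "Ob T = objs G I T" for T
  have finO: "finite (Ob T)" for T using fin unfolding Ob_def objs_def by auto
  have OG: "Ob T \<subseteq> G" for T unfolding Ob_def objs_def by auto
  define y where "y \<sigma> T = (if \<sigma> \<subseteq> Ob T \<and> card \<sigma> = 2 \<and> Min (Ob T) \<in> \<sigma> then x {Max \<sigma>} T else 0)" for \<sigma> T
  have xO: "x {g} T \<noteq> 0 \<Longrightarrow> g \<in> Ob T \<and> T \<subseteq> M \<and> card T = Suc k" for g T
    using c0_elem[OF x, of "{g}" T] unfolding Ob_def by auto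
  have xO': "x \<sigma> T \<noteq> 0 \<Longrightarrow> \<exists>g. \<sigma> = {g}" for \<sigma> T
    using c0_elem[OF x, of \<sigma> T] by auto
  have minO: "Ob T \<noteq> {} \<Longrightarrow> Min (Ob T) \<in> Ob T \<and> (\<forall>g\<in>Ob T. Min (Ob T) \<le> g)" for T
    using finO by auto
  have yC: "y \<in> cosheaf_chains G M I k 1"
    unfolding cosheaf_chains_def
  proof (intro CollectI allI conjI impI)
    fix \<sigma>
    have key: "\<sigma> \<subseteq> Ob T \<and> card \<sigma> = 2 \<and> T \<subseteq> attrs M I \<sigma> \<and> card T = Suc k" if "y \<sigma> T \<noteq> 0" for T
    proof -
      have a: "\<sigma> \<subseteq> Ob T" "card \<sigma> = 2" "x {Max \<sigma>} T \<noteq> 0"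
        using that unfolding y_def by (auto split: if_splits)
      have "T \<subseteq> M" "card T = Suc k" using xO[OF a(3)] by auto
      moreover have "T \<subseteq> attrs M I \<sigma>" using a(1) \<open>T \<subseteq> M\<close> unfolding Ob_def objs_def attrs_def by auto
      ultimately show ?thesis using a by auto
    qed
    { assume "y \<sigma> \<noteq> (\<lambda>_. 0)"
      then obtain T where T: "y \<sigma> T \<noteq> 0" by auto
      note k = key[OF T]
      have "T \<noteq> {}" using k by auto
      hence "attrs M I \<sigma> \<noteq> {}" using k by auto
      moreover have "\<sigma> \<noteq> {}" using k by auto
      moreover have "\<sigma> \<subseteq> G" using k OG by blast
      ultimately show "dowker_simplex G M I \<sigma>" unfolding dowker_simplex_def by auto
      show "card \<sigma> = Suc 1" using k by simp }
    show "y \<sigma> \<in> simp_chains k (attrs M I \<sigma>)" unfolding simp_chains_def using key by blast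
  qed
  have "cosheaf_bd G y = x"
  proof (intro ext)
    fix \<sigma> T
    show "cosheaf_bd G y \<sigma> T = x \<sigma> T"
    proof (cases "\<exists>g. \<sigma> = {g}")
      case False
      have "y (insert g' \<sigma>) T = 0" if "g' \<in> G - \<sigma>" for g'
      proof (rule ccontr)
        assume "y (insert g' \<sigma>) T \<noteq> 0"
        hence "insert g' \<sigma> \<subseteq> Ob T" "card (insert g' \<sigma>) = 2" unfolding y_def by (auto split: if_splits)
        moreover have fs: "finite \<sigma>" using calculation(1) finO by (meson finite_subset subset_insertI2 subset_refl)
        ultimately have "card \<sigma> = 1" using that by (simp add: card_insert_if)
        thus False using False by (metis card_1_singletonE)
      qed
      hence "cosheaf_bd G y \<sigma> T = 0" unfolding cosheaf_bd_def by simp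
      moreover have "x \<sigma> T = 0" using xO' False by blast
      ultimately show ?thesis by simp
    next
      case True
      then obtain g where g: "\<sigma> = {g}" by blast
      have sgn: "card {z\<in>{a}. z < b} = (if a < b then 1 else 0)" for a b :: 'g
      proof -
        have "{z\<in>{a}. z < b} = (if a < b then {a} else {})" by auto
        thus ?thesis by simp
      qed
      show ?thesis
      proof (cases "g \<in> Ob T")
        case False
        have "y (insert g' {g}) T = 0" for g'
          using False unfolding y_def by auto
        hence "cosheaf_bd G y \<sigma> T = 0" unfolding cosheaf_bd_def g by simp
        moreover have "x \<sigma> T = 0" using xO False g by blast
        ultimately show ?thesis by simp
      next
        case gO: True
        define g0 where "g0 = Min (Ob T)"
        have ne: "Ob T \<noteq> {}" using gO by auto
        have g0O: "g0 \<in> Ob T" and g0le: "\<And>h. h \<in> Ob T \<Longrightarrow> g0 \<le> h" using minO[OF ne] g0_def by auto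
        show ?thesis
        proof (cases "g = g0")
          case True
          have tm: "(-1) ^ card {z\<in>{g}. z < g'} * y (insert g' {g}) T = - x {g'} T"
            if "g' \<in> G - {g}" for g'
          proof (cases "g' \<in> Ob T")
            case True
            have "g0 < g'" using g0le[OF True] that \<open>g = g0\<close> by auto
            moreover have "y (insert g' {g}) T = x {g'} T"
              unfolding y_def using True g0O \<open>g = g0\<close> that \<open>g0 < g'\<close> g0_def
              by (auto simp: max_def)
            moreover have "card {z\<in>{g}. z < g'} = 1" using sgn[of g g'] \<open>g0 < g'\<close> \<open>g = g0\<close> by simp
            ultimately show ?thesis by simp
          next
            case False
            hence "x {g'} T = 0" using xO by blast
            moreover have "y (insert g' {g}) T = 0" unfolding y_def using False by auto
            ultimately show ?thesis by simp
          qed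
          have "cosheaf_bd G y \<sigma> T = (\<Sum>g'\<in>G - {g}. - x {g'} T)"
            unfolding cosheaf_bd_def g using tm by (intro sum.cong) auto
          also have "\<dots> = - (\<Sum>g'\<in>G - {g}. x {g'} T)" by (simp add: sum_negf)
          also have "\<dots> = x {g} T"
          proof -
            have "g \<in> G" using gO OG by blast
            hence "(\<Sum>g'\<in>G. x {g'} T) = x {g} T + (\<Sum>g'\<in>G - {g}. x {g'} T)"
              using fin by (simp add: sum.remove)
            thus ?thesis using z[of T] by simp
          qed
          finally show ?thesis using g by simp
        next
          case False
          have lt: "g0 < g" using g0le[OF gO] False by auto
          have g0G: "g0 \<in> G - {g}" using g0O OG False by blast
          have "cosheaf_bd G y \<sigma> T = (-1) ^ card {z\<in>{g}. z < g0} * y (insert g0 {g}) T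
               + (\<Sum>g'\<in>G - {g} - {g0}. (-1) ^ card {z\<in>{g}. z < g'} * y (insert g' {g}) T)"
            unfolding cosheaf_bd_def g using fin g0G by (simp add: sum.remove)
          also have "(\<Sum>g'\<in>G - {g} - {g0}. (-1) ^ card {z\<in>{g}. z < g'} * y (insert g' {g}) T) = 0"
          proof (intro sum.neutral ballI)
            fix g' assume "g' \<in> G - {g} - {g0}"
            hence "y (insert g' {g}) T = 0" unfolding y_def using False g0_def by auto
            thus "(-1) ^ card {z\<in>{g}. z < g'} * y (insert g' {g}) T = 0" by simp
          qed
          also have "y (insert g0 {g}) T = x {g} T"
            unfolding y_def using gO g0O lt g0_def by (auto simp: max_def)
          moreover have e: "{z. z = g \<and> z < g0} = {}" using lt by auto
          ultimately show ?thesis using g by (simp add: e)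
        qed
      qed
    qed
  qed
  thus ?thesis using yC by blast
qed


lemma psi_dual:
  assumes "x \<in> cosheaf_chains G M I k 0"
  shows "(\<lambda>T. \<Sum>g\<in>G. x {g} T) \<in> dual_chains G M I k"
  unfolding dual_chains_def
proof (intro CollectI allI impI)
  fix T assume "(\<Sum>g\<in>G. x {g} T) \<noteq> 0"
  then obtain g where "x {g} T \<noteq> 0" by (meson sum.neutral)
  from c0_elem[OF assms this] have h: "g \<in> objs G I T" "T \<subseteq> M" "card T = Suc k" by auto
  hence "T \<noteq> {}" by auto
  thus "dual_simplex G M I T \<and> card T = Suc k" using h unfolding dual_simplex_def by auto
qed

lemma surj_psi:
  fixes G :: "'g::linorder set"
  assumes fin: "finite G" and c: "c \<in> dual_chains G M I k"
  shows "\<exists>x\<in>cosheaf_chains G M I k 0. (\<lambda>T. \<Sum>g\<in>G. x {g} T) = c"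
proof -
  define x where "x \<sigma> T = (if objs G I T \<noteq> {} \<and> \<sigma> = {Min (objs G I T)} then c T else 0)" for \<sigma> T
  have finO: "finite (objs G I T)" for T using fin unfolding objs_def by auto
  have cT: "c T \<noteq> 0 \<Longrightarrow> dual_simplex G M I T \<and> card T = Suc k" for T
    using c unfolding dual_chains_def by blast
  have key: "x \<sigma> T \<noteq> 0 \<Longrightarrow> \<exists>g. \<sigma> = {g} \<and> g \<in> G \<and> T \<subseteq> attrs M I \<sigma> \<and> T \<noteq> {} \<and> card T = Suc k" for \<sigma> T
  proof -
    assume a: "x \<sigma> T \<noteq> 0"
    hence ne: "objs G I T \<noteq> {}" and s: "\<sigma> = {Min (objs G I T)}" and cn: "c T \<noteq> 0"
      unfolding x_def by (auto split: if_splits)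
    have m: "Min (objs G I T) \<in> objs G I T" using ne finO by auto
    have d: "dual_simplex G M I T" "card T = Suc k" using cT[OF cn] by auto
    hence "T \<subseteq> M" "T \<noteq> {}" unfolding dual_simplex_def by auto
    hence "T \<subseteq> attrs M I \<sigma>" using m s unfolding objs_def attrs_def by auto
    thus ?thesis using s m d \<open>T \<noteq> {}\<close> unfolding objs_def by auto
  qed
  have xC: "x \<in> cosheaf_chains G M I k 0"
    unfolding cosheaf_chains_def
  proof (intro CollectI allI conjI impI)
    fix \<sigma>
    { assume "x \<sigma> \<noteq> (\<lambda>_. 0)"
      then obtain T where "x \<sigma> T \<noteq> 0" by auto
      from key[OF this] obtain g where g: "\<sigma> = {g}" "g \<in> G" "T \<subseteq> attrs M I \<sigma>" "T \<noteq> {}" by blast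
      thus "dowker_simplex G M I \<sigma>" unfolding dowker_simplex_def by auto
      show "card \<sigma> = Suc 0" using g by simp }
    show "x \<sigma> \<in> simp_chains k (attrs M I \<sigma>)" unfolding simp_chains_def using key by blast
  qed
  have "(\<Sum>g\<in>G. x {g} T) = c T" for T
  proof (cases "objs G I T = {}")
    case True
    hence "c T = 0" using cT unfolding dual_simplex_def by blast
    thus ?thesis using True unfolding x_def by simp
  next
    case False
    have m: "Min (objs G I T) \<in> G" using False finO Min_in[of "objs G I T"] unfolding objs_def by auto
    have "(\<Sum>g\<in>G. x {g} T) = (\<Sum>g\<in>G. if g = Min (objs G I T) then c T else 0)"
      unfolding x_def using False by (intro sum.cong) auto
    also have "\<dots> = c T" using m fin by simp
    finally show ?thesis .
  qed
  thus ?thesis using xC by blast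
qed

lemma B1_sub:
  assumes "finite G" "a \<in> cosheaf_B1 G M I k" "b \<in> cosheaf_B1 G M I k"
  shows "(\<lambda>\<sigma> S. a \<sigma> S - b \<sigma> S) \<in> cosheaf_B1 G M I k"
proof -
  obtain u v where u: "u \<in> cosheaf_chains G M I k 1" "a = cosheaf_bd G u"
    and v: "v \<in> cosheaf_chains G M I k 1" "b = cosheaf_bd G v"
    using assms unfolding cosheaf_B1_def by blast
  have w: "(\<lambda>\<sigma> S. 1 * u \<sigma> S + (-1) * v \<sigma> S) \<in> cosheaf_chains G M I k 1"
    by (rule chains_lin[OF u(1) v(1)])
  have eq: "cosheaf_bd G (\<lambda>\<sigma> S. 1 * u \<sigma> S + (-1) * v \<sigma> S) = (\<lambda>\<sigma> S. a \<sigma> S - b \<sigma> S)"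
    unfolding u v cosheaf_bd_def by (intro ext) (simp add: sum_subtractf[symmetric] right_diff_distrib)
  show ?thesis unfolding cosheaf_B1_def by (rule image_eqI[where f="cosheaf_bd G", OF eq[symmetric] w])
qed

lemma zero_B1: "(\<lambda>\<sigma> S. 0) \<in> cosheaf_B1 G M I k"
proof -
  have w: "(\<lambda>\<sigma> S. 0) \<in> cosheaf_chains G M I k 1" unfolding cosheaf_chains_def simp_chains_def by simp
  have eq: "cosheaf_bd G (\<lambda>\<sigma> S. 0) = (\<lambda>\<sigma> S. 0)" unfolding cosheaf_bd_def by simp
  show ?thesis unfolding cosheaf_B1_def by (rule image_eqI[where f="cosheaf_bd G", OF eq[symmetric] w])
qed

lemma cls_self: "x \<in> cosheaf_chains G M I k 0 \<Longrightarrow> x \<in> H0_class G M I k x"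
  unfolding H0_class_def using zero_B1 by simp

lemma cls_eq:
  assumes "finite G" "(\<lambda>\<sigma> S. x \<sigma> S - y \<sigma> S) \<in> cosheaf_B1 G M I k"
  shows "H0_class G M I k x = H0_class G M I k y"
proof -
  have yx: "(\<lambda>\<sigma> S. y \<sigma> S - x \<sigma> S) \<in> cosheaf_B1 G M I k"
    using B1_sub[OF assms(1) zero_B1 assms(2)] by simp
  show ?thesis unfolding H0_class_def
  proof (intro Collect_cong conj_cong refl iffI)
    fix z
    assume "(\<lambda>\<sigma> S. x \<sigma> S - z \<sigma> S) \<in> cosheaf_B1 G M I k"
    from B1_sub[OF assms(1) this assms(2)] show "(\<lambda>\<sigma> S. y \<sigma> S - z \<sigma> S) \<in> cosheaf_B1 G M I k" by simp
  next
    fix z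
    assume "(\<lambda>\<sigma> S. y \<sigma> S - z \<sigma> S) \<in> cosheaf_B1 G M I k"
    from B1_sub[OF assms(1) this yx] show "(\<lambda>\<sigma> S. x \<sigma> S - z \<sigma> S) \<in> cosheaf_B1 G M I k" by simp
  qed
qed

lemma phi_cls:
  fixes G :: "'g::linorder set"
  assumes fin: "finite G" and x: "x \<in> cosheaf_chains G M I k 0"
  shows "(\<lambda>T. \<Sum>g\<in>G. (SOME z. z \<in> H0_class G M I k x) {g} T) = (\<lambda>T. \<Sum>g\<in>G. x {g} T)"
proof -
  define z where "z = (SOME z. z \<in> H0_class G M I k x)"
  have "z \<in> H0_class G M I k x" unfolding z_def by (rule someI[where P="\<lambda>z. z \<in> H0_class G M I k x", OF cls_self[OF x]])
  then obtain w where "cosheaf_bd G w = (\<lambda>\<sigma> S. x \<sigma> S - z \<sigma> S)"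
    unfolding H0_class_def cosheaf_B1_def by auto
  hence "(\<Sum>g\<in>G. x {g} T - z {g} T) = 0" for T using kill[OF fin, of w T] by simp
  hence "(\<Sum>g\<in>G. z {g} T) = (\<Sum>g\<in>G. x {g} T)" for T by (simp add: sum_subtractf)
  thus ?thesis unfolding z_def by simp
qed

theorem mainTheorem6:
  fixes G :: "'g::linorder set" and M :: "'m::linorder set" and I :: "('g \<times> 'm) set"
  assumes "finite G" and "finite M" and "I \<subseteq> G \<times> M"
  shows "(\<forall>k. \<forall>x\<in>cosheaf_chains G M I (Suc k) 0. sum_bd M x \<in> cosheaf_chains G M I k 0)
    \<and> (\<forall>k. \<forall>x\<in>cosheaf_chains G M I (Suc k) 1.
          sum_bd M (cosheaf_bd G x) = cosheaf_bd G (sum_bd M x)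
          \<and> sum_bd M x \<in> cosheaf_chains G M I k 1)
    \<and> (\<forall>k. \<forall>x\<in>cosheaf_B1 G M I (Suc k). sum_bd M x \<in> cosheaf_B1 G M I k)
    \<and> (\<exists>\<phi>. \<forall>k.
          bij_betw (\<phi> k) (H0 G M I k) (dual_chains G M I k)
        \<and> (\<forall>x\<in>cosheaf_chains G M I k 0. \<forall>y\<in>cosheaf_chains G M I k 0.
             \<phi> k (H0_class G M I k (\<lambda>\<sigma> S. x \<sigma> S + y \<sigma> S))
               = (\<lambda>T. \<phi> k (H0_class G M I k x) T + \<phi> k (H0_class G M I k y) T))
        \<and> (\<forall>x\<in>cosheaf_chains G M I k 0. \<forall>a::real.
             \<phi> k (H0_class G M I k (\<lambda>\<sigma> S. a * x \<sigma> S))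
               = (\<lambda>T. a * \<phi> k (H0_class G M I k x) T))
        \<and> (\<forall>x\<in>cosheaf_chains G M I (Suc k) 0.
             \<phi> k (H0_class G M I k (sum_bd M x))
               = bd_simp M (\<phi> (Suc k) (H0_class G M I (Suc k) x))))"
proof -
  note fin = assms(1) assms(2)
  have p1: "\<forall>k. \<forall>x\<in>cosheaf_chains G M I (Suc k) 0. sum_bd M x \<in> cosheaf_chains G M I k 0"
    using sum_bd_chains by blast
  have p2: "\<forall>k. \<forall>x\<in>cosheaf_chains G M I (Suc k) 1.
          sum_bd M (cosheaf_bd G x) = cosheaf_bd G (sum_bd M x)
          \<and> sum_bd M x \<in> cosheaf_chains G M I k 1"
    using sum_bd_chains bd_commute[OF fin] by blast
  have p3: "\<forall>k. \<forall>x\<in>cosheaf_B1 G M I (Suc k). sum_bd M x \<in> cosheaf_B1 G M I k"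
  proof (intro allI ballI)
    fix k x assume "x \<in> cosheaf_B1 G M I (Suc k)"
    then obtain w where w: "w \<in> cosheaf_chains G M I (Suc k) 1" "x = cosheaf_bd G w"
      unfolding cosheaf_B1_def by blast
    have "sum_bd M x = cosheaf_bd G (sum_bd M w)" using w(2) bd_commute[OF fin] by simp
    moreover have "sum_bd M w \<in> cosheaf_chains G M I k 1" using sum_bd_chains[OF w(1)] .
    ultimately show "sum_bd M x \<in> cosheaf_B1 G M I k" unfolding cosheaf_B1_def by blast
  qed
  define \<phi> :: "nat \<Rightarrow> ('g set \<Rightarrow> 'm set \<Rightarrow> real) set \<Rightarrow> 'm set \<Rightarrow> real" where "\<phi> = (\<lambda>(k::nat) C. (\<lambda>T. \<Sum>g\<in>G. (SOME z. z \<in> C) {g} T))"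
  have phi: "\<phi> k (H0_class G M I k x) = (\<lambda>T. \<Sum>g\<in>G. x {g} T)"
    if "x \<in> cosheaf_chains G M I k 0" for k x
    unfolding \<phi>_def using phi_cls[OF fin(1) that] by simp
  have p4: "\<forall>k.
          bij_betw (\<phi> k) (H0 G M I k) (dual_chains G M I k)
        \<and> (\<forall>x\<in>cosheaf_chains G M I k 0. \<forall>y\<in>cosheaf_chains G M I k 0.
             \<phi> k (H0_class G M I k (\<lambda>\<sigma> S. x \<sigma> S + y \<sigma> S))
               = (\<lambda>T. \<phi> k (H0_class G M I k x) T + \<phi> k (H0_class G M I k y) T))
        \<and> (\<forall>x\<in>cosheaf_chains G M I k 0. \<forall>a::real.
             \<phi> k (H0_class G M I k (\<lambda>\<sigma> S. a * x \<sigma> S))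
               = (\<lambda>T. a * \<phi> k (H0_class G M I k x) T))
        \<and> (\<forall>x\<in>cosheaf_chains G M I (Suc k) 0.
             \<phi> k (H0_class G M I k (sum_bd M x))
               = bd_simp M (\<phi> (Suc k) (H0_class G M I (Suc k) x)))"
  proof (intro allI conjI ballI)
    fix k
    show "bij_betw (\<phi> k) (H0 G M I k) (dual_chains G M I k)"
      unfolding bij_betw_def
    proof
      show "inj_on (\<phi> k) (H0 G M I k)"
      proof (rule inj_onI)
        fix A B assume A: "A \<in> H0 G M I k" and B: "B \<in> H0 G M I k" and e: "\<phi> k A = \<phi> k B"
        obtain x where x: "x \<in> cosheaf_chains G M I k 0" "A = H0_class G M I k x"
          using A unfolding H0_def by blast
        obtain y where y: "y \<in> cosheaf_chains G M I k 0" "B = H0_class G M I k y"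
          using B unfolding H0_def by blast
        have "(\<lambda>T. \<Sum>g\<in>G. x {g} T) = (\<lambda>T. \<Sum>g\<in>G. y {g} T)"
          using e phi[OF x(1)] phi[OF y(1)] x(2) y(2) by simp
        hence z: "(\<Sum>g\<in>G. x {g} T - y {g} T) = 0" for T
          by (simp add: sum_subtractf fun_eq_iff)
        have d: "(\<lambda>\<sigma> S. x \<sigma> S - y \<sigma> S) \<in> cosheaf_chains G M I k 0"
          using chains_lin[OF x(1) y(1), of 1 "-1"] by simp
        obtain w where w: "w \<in> cosheaf_chains G M I k 1" "cosheaf_bd G w = (\<lambda>\<sigma> S. x \<sigma> S - y \<sigma> S)"
          using exact[OF fin(1) d] z by auto
        have "(\<lambda>\<sigma> S. x \<sigma> S - y \<sigma> S) \<in> cosheaf_B1 G M I k"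
          unfolding cosheaf_B1_def by (rule image_eqI[where f="cosheaf_bd G", OF w(2)[symmetric] w(1)])
        from cls_eq[OF fin(1) this] show "A = B" using x(2) y(2) by simp
      qed
      show "\<phi> k ` H0 G M I k = dual_chains G M I k"
      proof
        show "\<phi> k ` H0 G M I k \<subseteq> dual_chains G M I k"
          unfolding H0_def using phi psi_dual by auto
        show "dual_chains G M I k \<subseteq> \<phi> k ` H0 G M I k"
        proof
          fix c assume "c \<in> dual_chains G M I k"
          from surj_psi[OF fin(1) this] obtain x where
            x: "x \<in> cosheaf_chains G M I k 0" "(\<lambda>T. \<Sum>g\<in>G. x {g} T) = c" by blast
          hence "c = \<phi> k (H0_class G M I k x)" using phi[OF x(1)] by simp
          moreover have "H0_class G M I k x \<in> H0 G M I k" unfolding H0_def using x(1) by blast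
          ultimately show "c \<in> \<phi> k ` H0 G M I k" by blast
        qed
      qed
    qed
  next
    fix k x y assume x: "x \<in> cosheaf_chains G M I k 0" and y: "y \<in> cosheaf_chains G M I k 0"
    have s: "(\<lambda>\<sigma> S. x \<sigma> S + y \<sigma> S) \<in> cosheaf_chains G M I k 0"
      using chains_lin[OF x y, of 1 1] by simp
    show "\<phi> k (H0_class G M I k (\<lambda>\<sigma> S. x \<sigma> S + y \<sigma> S))
               = (\<lambda>T. \<phi> k (H0_class G M I k x) T + \<phi> k (H0_class G M I k y) T)"
      using phi[OF s] phi[OF x] phi[OF y] by (simp add: sum.distrib)
  next
    fix k x and a :: real assume x: "x \<in> cosheaf_chains G M I k 0"
    have s: "(\<lambda>\<sigma> S. a * x \<sigma> S) \<in> cosheaf_chains G M I k 0"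
      using chains_lin[OF x x, of a 0] by simp
    show "\<phi> k (H0_class G M I k (\<lambda>\<sigma> S. a * x \<sigma> S)) = (\<lambda>T. a * \<phi> k (H0_class G M I k x) T)"
      using phi[OF s] phi[OF x] by (simp add: sum_distrib_left)
  next
    fix k x assume x: "x \<in> cosheaf_chains G M I (Suc k) 0"
    have s: "sum_bd M x \<in> cosheaf_chains G M I k 0" using sum_bd_chains[OF x] .
    have "(\<lambda>T. \<Sum>g\<in>G. sum_bd M x {g} T) = bd_simp M (\<lambda>T. \<Sum>g\<in>G. x {g} T)"
      unfolding sum_bd_def bd_simp_def
      by (intro ext) (simp add: sum_distrib_left sum.swap[of _ G])
    thus "\<phi> k (H0_class G M I k (sum_bd M x)) = bd_simp M (\<phi> (Suc k) (H0_class G M I (Suc k) x))"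
      using phi[OF s] phi[OF x] by simp
  qed
  show ?thesis using p1 p2 p3 p4 by blast
qed

end
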